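(* Let $B$ be a complete filtered BV algebra and $r\in F^1B$ odd. Define the operator $T(\exp(r)):B\to B$ by $$T(\exp(r))a=\exp\!\big(c(\exp(r))\big)\cdot\exp(r)a,$$ where $\exp(r)a=\sum_{k\ge0}\frac{\mathrm{ad}(r)^k a}{k!}$, $\mathrm{ad}(r)=\{r,\cdot\}$, $c(\exp(r))=\sum_{n\ge0}\frac{\mathrm{ad}(r)^n(\partial r)}{(n+1)!}$, and $\exp(c)=\sum_{m\ge0}c^m/m!$ is the exponential in the algebra $B$. Then $\partial\circ T(\exp(r))=T(\exp(r))\circ\partial$.
   Context: A BV algebra is a $\mathbb Z_2$-graded unital graded-commutative algebra $B$ (parity $\tilde a$) with an odd bracket $\{\cdot,\cdot\}$ making it an odd Poisson algebra ($\{a,b\}=-(-1)^{(\tilde a+1)(\tilde b+1)}\{b,a\}$, graded Jacobi for shifted parity, $\{a,bc\}=\{a,b\}c+(-1)^{(\tilde a+1)\tilde b}b\{a,c\}$), and an odd operator $\partial$ with $\partial^2=0$ and $(-1)^{\tilde a}\{a,b\}=-\partial(ab)+(\partial a)b+(-1)^{\tilde a}a(\partial b)$. "Complete filtered" means $B$ carries a descending filtration $B=F^0B\supseteq F^1B\supseteq\cdots$ by graded subspaces with $F^iF^j\subseteq F^{i+j}$, $\{F^i,F^j\}\subseteq F^{i+j}$, $\partial F^i\subseteq F^i$, and $B$ is complete with respect to it, so that all series converge. *)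

theory Defs
  imports Main
begin

text \<open>A Z2-graded unital algebra is modelled as a (not necessarily commutative)
ring B of type 'a with two homogeneous components G 0 (even) and G 1 (odd).
The ground field is of characteristic 0; we only use that B is an algebra over
the rationals, i.e. positive integers are invertible in B.  The bracket and the
BV operator are additive (hence Q-linear).\<close>

definition invn :: "nat \<Rightarrow> 'a::ring_1" where
  "invn n = (SOME u. of_nat n * u = 1 \<and> u * of_nat n = 1)"

definition fconv :: "(nat \<Rightarrow> 'a::ring_1 set) \<Rightarrow> (nat \<Rightarrow> 'a) \<Rightarrow> 'a \<Rightarrow> bool" where
  "fconv F x s \<longleftrightarrow> (\<forall>i. \<exists>N. \<forall>n\<ge>N. x n - s \<in> F i)"

definition fcauchy :: "(nat \<Rightarrow> 'a::ring_1 set) \<Rightarrow> (nat \<Rightarrow> 'a) \<Rightarrow> bool" where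
  "fcauchy F x \<longleftrightarrow> (\<forall>i. \<exists>N. \<forall>m\<ge>N. \<forall>n\<ge>N. x m - x n \<in> F i)"

definition fsuminf :: "(nat \<Rightarrow> 'a::ring_1 set) \<Rightarrow> (nat \<Rightarrow> 'a) \<Rightarrow> 'a" where
  "fsuminf F f = (THE s. fconv F (\<lambda>n. \<Sum>k<n. f k) s)"

definition add_subgroup :: "'a::ring_1 set \<Rightarrow> bool" where
  "add_subgroup S \<longleftrightarrow> 0 \<in> S \<and> (\<forall>x\<in>S. \<forall>y\<in>S. x + y \<in> S) \<and> (\<forall>x\<in>S. - x \<in> S)"

definition complete_filtered_BV ::
  "(nat \<Rightarrow> 'a::ring_1 set) \<Rightarrow> (nat \<Rightarrow> 'a set) \<Rightarrow> ('a \<Rightarrow> 'a \<Rightarrow> 'a) \<Rightarrow> ('a \<Rightarrow> 'a) \<Rightarrow> bool"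
where
  "complete_filtered_BV G F br d \<longleftrightarrow>
     \<comment> \<open>rational algebra\<close>
     (\<forall>n::nat. n > 0 \<longrightarrow> (\<exists>u::'a. of_nat n * u = 1 \<and> u * of_nat n = 1)) \<and>
     \<comment> \<open>Z2-grading\<close>
     add_subgroup (G 0) \<and> add_subgroup (G 1) \<and> G 0 \<inter> G 1 = {0} \<and>
     (\<forall>a. \<exists>e\<in>G 0. \<exists>y\<in>G 1. a = e + y) \<and>
     1 \<in> G 0 \<and>
     (\<forall>p<2. \<forall>q<2. \<forall>a\<in>G p. \<forall>b\<in>G q. a * b \<in> G ((p + q) mod 2)) \<and>
     \<comment> \<open>graded commutativity\<close>
     (\<forall>p<2. \<forall>q<2. \<forall>a\<in>G p. \<forall>b\<in>G q. a * b = (-1) ^ (p * q) * (b * a)) \<and>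
     \<comment> \<open>odd bracket: biadditive, odd, odd Poisson\<close>
     (\<forall>a b c. br (a + b) c = br a c + br b c) \<and>
     (\<forall>a b c. br a (b + c) = br a b + br a c) \<and>
     (\<forall>p<2. \<forall>q<2. \<forall>a\<in>G p. \<forall>b\<in>G q. br a b \<in> G ((p + q + 1) mod 2)) \<and>
     (\<forall>p<2. \<forall>q<2. \<forall>a\<in>G p. \<forall>b\<in>G q.
        br a b = - ((-1) ^ ((p + 1) * (q + 1)) * br b a)) \<and>
     (\<forall>p<2. \<forall>q<2. \<forall>a\<in>G p. \<forall>b\<in>G q. \<forall>c.
        br a (br b c) = br (br a b) c + (-1) ^ ((p + 1) * (q + 1)) * br b (br a c)) \<and>
     (\<forall>p<2. \<forall>q<2. \<forall>a\<in>G p. \<forall>b\<in>G q. \<forall>c.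
        br a (b * c) = br a b * c + (-1) ^ ((p + 1) * q) * (b * br a c)) \<and>
     \<comment> \<open>BV operator\<close>
     (\<forall>a b. d (a + b) = d a + d b) \<and>
     (\<forall>p<2. \<forall>a\<in>G p. d a \<in> G ((p + 1) mod 2)) \<and>
     (\<forall>a. d (d a) = 0) \<and>
     (\<forall>p<2. \<forall>a\<in>G p. \<forall>b.
        (-1) ^ p * br a b = - d (a * b) + d a * b + (-1) ^ p * (a * d b)) \<and>
     \<comment> \<open>filtration\<close>
     F 0 = UNIV \<and> (\<forall>i. F (Suc i) \<subseteq> F i) \<and> (\<forall>i. add_subgroup (F i)) \<and>
     (\<forall>i. \<forall>a\<in>F i. \<exists>e\<in>G 0 \<inter> F i. \<exists>y\<in>G 1 \<inter> F i. a = e + y) \<and>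
     (\<forall>i j. \<forall>a\<in>F i. \<forall>b\<in>F j. a * b \<in> F (i + j)) \<and>
     (\<forall>i j. \<forall>a\<in>F i. \<forall>b\<in>F j. br a b \<in> F (i + j)) \<and>
     (\<forall>i. \<forall>a\<in>F i. d a \<in> F i) \<and>
     \<comment> \<open>completeness (Hausdorff and every Cauchy sequence converges)\<close>
     (\<Inter>i. F i) = {0} \<and>
     (\<forall>x. fcauchy F x \<longrightarrow> (\<exists>s. fconv F x s))"

definition exp_ad :: "(nat \<Rightarrow> 'a::ring_1 set) \<Rightarrow> ('a \<Rightarrow> 'a \<Rightarrow> 'a) \<Rightarrow> 'a \<Rightarrow> 'a \<Rightarrow> 'a" where
  "exp_ad F br r a = fsuminf F (\<lambda>k. invn (fact k) * ((br r) ^^ k) a)"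

definition c_exp :: "(nat \<Rightarrow> 'a::ring_1 set) \<Rightarrow> ('a \<Rightarrow> 'a \<Rightarrow> 'a) \<Rightarrow> ('a \<Rightarrow> 'a) \<Rightarrow> 'a \<Rightarrow> 'a" where
  "c_exp F br d r = fsuminf F (\<lambda>n. invn (fact (n + 1)) * ((br r) ^^ n) (d r))"

definition alg_exp :: "(nat \<Rightarrow> 'a::ring_1 set) \<Rightarrow> 'a \<Rightarrow> 'a" where
  "alg_exp F c = fsuminf F (\<lambda>m. invn (fact m) * c ^ m)"

definition T_exp :: "(nat \<Rightarrow> 'a::ring_1 set) \<Rightarrow> ('a \<Rightarrow> 'a \<Rightarrow> 'a) \<Rightarrow> ('a \<Rightarrow> 'a) \<Rightarrow> 'a \<Rightarrow> 'a \<Rightarrow> 'a" where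
  "T_exp F br d r a = alg_exp F (c_exp F br d r) * exp_ad F br r a"

end

theory Submission
  imports Defs
begin



lemma sum_in_sub:
  assumes "add_subgroup S" "\<And>x. x \<in> A \<Longrightarrow> f x \<in> S"
  shows "sum f A \<in> S"
proof (cases "finite A")
  case True
  then show ?thesis using assms(2)
    by (induction A rule: finite_induct) (use assms(1) in \<open>auto simp: add_subgroup_def\<close>)
next
  case False then show ?thesis using assms(1) by (simp add: add_subgroup_def)
qed

lemma sub_diff: "add_subgroup S \<Longrightarrow> x \<in> S \<Longrightarrow> y \<in> S \<Longrightarrow> x - y \<in> S"
  unfolding add_subgroup_def by (metis diff_conv_add_uminus)

lemma sub_add: "add_subgroup S \<Longrightarrow> x \<in> S \<Longrightarrow> y \<in> S \<Longrightarrow> x + y \<in> S"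
  unfolding add_subgroup_def by blast

lemma sub_uminus: "add_subgroup S \<Longrightarrow> x \<in> S \<Longrightarrow> - x \<in> S"
  unfolding add_subgroup_def by blast

lemma sub_zero: "add_subgroup S \<Longrightarrow> 0 \<in> S"
  unfolding add_subgroup_def by blast

lemma sub_of_nat: "add_subgroup S \<Longrightarrow> x \<in> S \<Longrightarrow> of_nat n * x \<in> S"
  by (induction n) (auto simp: sub_zero sub_add distrib_right)

lemma additive_basics:
  fixes \<phi> :: "'a::ring_1 \<Rightarrow> 'a"
  assumes "\<And>a b. \<phi> (a + b) = \<phi> a + \<phi> b"
  shows "\<phi> 0 = 0" "\<phi> (- x) = - \<phi> x" "\<phi> (x - y) = \<phi> x - \<phi> y"
    "\<phi> (sum f A) = sum (\<lambda>i. \<phi> (f i)) A"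
    "\<phi> (of_nat n * x) = of_nat n * \<phi> x"
proof -
  have h: "\<phi> 0 = \<phi> 0 + \<phi> 0" using assms[of 0 0] by simp
  show z: "\<phi> 0 = 0" using h by (rule add_cancel_right_right[THEN iffD1])
  show m: "\<phi> (- x) = - \<phi> x" for x using assms[of x "-x"] z by (metis neg_eq_iff_add_eq_0 add.right_inverse)
  show "\<phi> (x - y) = \<phi> x - \<phi> y" using assms[of x "-y"] m by simp
  show "\<phi> (sum f A) = sum (\<lambda>i. \<phi> (f i)) A"
    by (induction A rule: infinite_finite_induct) (auto simp: z assms)
  show "\<phi> (of_nat n * x) = of_nat n * \<phi> x"
    by (induction n) (auto simp: z assms distrib_right)
qed

locale cbv =
  fixes G F :: "nat \<Rightarrow> 'a::ring_1 set" and br :: "'a \<Rightarrow> 'a \<Rightarrow> 'a" and d :: "'a \<Rightarrow> 'a"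
  assumes A1: "(\<forall>n::nat. n > 0 \<longrightarrow> (\<exists>u::'a. of_nat n * u = 1 \<and> u * of_nat n = 1))"
  and A2: "add_subgroup (G 0)" and A3: "add_subgroup (G 1)" and A4: "G 0 \<inter> G 1 = {0}"
  and A5: "(\<forall>a. \<exists>e\<in>G 0. \<exists>y\<in>G 1. a = e + y)"
  and A6: "1 \<in> G 0"
  and A7: "(\<forall>p<2. \<forall>q<2. \<forall>a\<in>G p. \<forall>b\<in>G q. a * b \<in> G ((p + q) mod 2))"
  and A8: "(\<forall>p<2. \<forall>q<2. \<forall>a\<in>G p. \<forall>b\<in>G q. a * b = (-1) ^ (p * q) * (b * a))"
  and A9: "(\<forall>a b c. br (a + b) c = br a c + br b c)"
  and A10: "(\<forall>a b c. br a (b + c) = br a b + br a c)"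
  and A11: "(\<forall>p<2. \<forall>q<2. \<forall>a\<in>G p. \<forall>b\<in>G q. br a b \<in> G ((p + q + 1) mod 2))"
  and A12: "(\<forall>p<2. \<forall>q<2. \<forall>a\<in>G p. \<forall>b\<in>G q.
        br a b = - ((-1) ^ ((p + 1) * (q + 1)) * br b a))"
  and A13: "(\<forall>p<2. \<forall>q<2. \<forall>a\<in>G p. \<forall>b\<in>G q. \<forall>c.
        br a (br b c) = br (br a b) c + (-1) ^ ((p + 1) * (q + 1)) * br b (br a c))"
  and A14: "(\<forall>p<2. \<forall>q<2. \<forall>a\<in>G p. \<forall>b\<in>G q. \<forall>c.
        br a (b * c) = br a b * c + (-1) ^ ((p + 1) * q) * (b * br a c))"
  and A15: "(\<forall>a b. d (a + b) = d a + d b)"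
  and A16: "(\<forall>p<2. \<forall>a\<in>G p. d a \<in> G ((p + 1) mod 2))"
  and A17: "(\<forall>a. d (d a) = 0)"
  and A18: "(\<forall>p<2. \<forall>a\<in>G p. \<forall>b.
        (-1) ^ p * br a b = - d (a * b) + d a * b + (-1) ^ p * (a * d b))"
  and A19: "F 0 = UNIV" and A20: "(\<forall>i. F (Suc i) \<subseteq> F i)" and A21: "(\<forall>i. add_subgroup (F i))"
  and A22: "(\<forall>i. \<forall>a\<in>F i. \<exists>e\<in>G 0 \<inter> F i. \<exists>y\<in>G 1 \<inter> F i. a = e + y)"
  and A23: "(\<forall>i j. \<forall>a\<in>F i. \<forall>b\<in>F j. a * b \<in> F (i + j))"
  and A24: "(\<forall>i j. \<forall>a\<in>F i. \<forall>b\<in>F j. br a b \<in> F (i + j))"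
  and A25: "(\<forall>i. \<forall>a\<in>F i. d a \<in> F i)"
  and A26: "(\<Inter>i. F i) = {0}"
  and A27: "(\<forall>x. fcauchy F x \<longrightarrow> (\<exists>s. fconv F x s))"
begin

lemma rat: "\<And>n::nat. n > 0 \<Longrightarrow> (\<exists>u::'a. of_nat n * u = 1 \<and> u * of_nat n = 1)" using A1 by blast
lemmas G0sub = A2 and G1sub = A3 and Gdisj = A4 and one_G0 = A6 and F0 = A19 and Finter = A26
lemma Gdec: "\<exists>e\<in>G 0. \<exists>y\<in>G 1. a = e + y" using A5 by blast
lemma Gmult: "p<2 \<Longrightarrow> q<2 \<Longrightarrow> a\<in>G p \<Longrightarrow> b\<in>G q \<Longrightarrow> a * b \<in> G ((p + q) mod 2)" using A7 by blast
lemma Gcomm: "p<2 \<Longrightarrow> q<2 \<Longrightarrow> a\<in>G p \<Longrightarrow> b\<in>G q \<Longrightarrow> a * b = (-1) ^ (p * q) * (b * a)" using A8 by blast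
lemma br_addL: "br (a + b) c = br a c + br b c" using A9 by blast
lemma br_addR: "br a (b + c) = br a b + br a c" using A10 by blast
lemma br_G: "p<2 \<Longrightarrow> q<2 \<Longrightarrow> a\<in>G p \<Longrightarrow> b\<in>G q \<Longrightarrow> br a b \<in> G ((p + q + 1) mod 2)" using A11 by blast
lemma br_sym: "p<2 \<Longrightarrow> q<2 \<Longrightarrow> a\<in>G p \<Longrightarrow> b\<in>G q \<Longrightarrow>
        br a b = - ((-1) ^ ((p + 1) * (q + 1)) * br b a)" using A12 by blast
lemma br_jac: "p<2 \<Longrightarrow> q<2 \<Longrightarrow> a\<in>G p \<Longrightarrow> b\<in>G q \<Longrightarrow>
        br a (br b c) = br (br a b) c + (-1) ^ ((p + 1) * (q + 1)) * br b (br a c)" using A13 by blast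
lemma br_leib: "p<2 \<Longrightarrow> q<2 \<Longrightarrow> a\<in>G p \<Longrightarrow> b\<in>G q \<Longrightarrow>
        br a (b * c) = br a b * c + (-1) ^ ((p + 1) * q) * (b * br a c)" using A14 by blast
lemma d_add: "d (a + b) = d a + d b" using A15 by blast
lemma d_G: "p<2 \<Longrightarrow> a\<in>G p \<Longrightarrow> d a \<in> G ((p + 1) mod 2)" using A16 by blast
lemma dd: "d (d a) = 0" using A17 by blast
lemma bv: "p<2 \<Longrightarrow> a\<in>G p \<Longrightarrow>
        (-1) ^ p * br a b = - d (a * b) + d a * b + (-1) ^ p * (a * d b)" using A18 by blast
lemma Fsuc: "F (Suc i) \<subseteq> F i" using A20 by blast
lemma Fsub: "add_subgroup (F i)" using A21 by blast
lemma Fdec: "a\<in>F i \<Longrightarrow> \<exists>e\<in>G 0 \<inter> F i. \<exists>y\<in>G 1 \<inter> F i. a = e + y" using A22 by blast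
lemma Fmult: "a\<in>F i \<Longrightarrow> b\<in>F j \<Longrightarrow> a * b \<in> F (i + j)" using A23 by blast
lemma Fbr: "a\<in>F i \<Longrightarrow> b\<in>F j \<Longrightarrow> br a b \<in> F (i + j)" using A24 by blast
lemma Fd: "a\<in>F i \<Longrightarrow> d a \<in> F i" using A25 by blast
lemma complete: "fcauchy F x \<Longrightarrow> (\<exists>s. fconv F x s)" using A27 by blast

lemma Fmono: "i \<le> j \<Longrightarrow> F j \<subseteq> F i"
  by (induction j rule: dec_induct) (use Fsuc in auto)

lemma FmonoI: "x \<in> F j \<Longrightarrow> i \<le> j \<Longrightarrow> x \<in> F i"
  using Fmono by blast

lemma F0I[simp]: "x \<in> F 0" using F0 by simp

lemma zero_only: "(\<And>i. x \<in> F i) \<Longrightarrow> x = 0"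
  using Finter by blast

lemma invn_prop: assumes "n > 0" shows "of_nat n * (invn n :: 'a) = 1 \<and> (invn n :: 'a) * of_nat n = 1"
  unfolding invn_def using rat[OF assms] by (rule someI_ex)

lemma invn_l: "n > 0 \<Longrightarrow> of_nat n * (invn n :: 'a) = 1" using invn_prop by blast
lemma invn_r: "n > 0 \<Longrightarrow> (invn n :: 'a) * of_nat n = 1" using invn_prop by blast

lemma invn_comm: "n > 0 \<Longrightarrow> (invn n :: 'a) * x = x * invn n"
proof -
  assume n: "n > 0"
  have "invn n * x = invn n * x * (of_nat n * invn n)" using invn_l[OF n] by simp
  also have "\<dots> = invn n * (x * of_nat n) * invn n" by (simp add: mult.assoc)
  also have "\<dots> = invn n * (of_nat n * x) * invn n" by (subst mult_of_nat_commute) simp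
  also have "\<dots> = (invn n * of_nat n) * x * invn n" by (simp add: mult.assoc)
  finally show ?thesis using invn_r[OF n] by simp
qed

lemma invn_swap: "n > 0 \<Longrightarrow> (invn n :: 'a) * (u * y) = u * (invn n * y)"
proof -
  assume n: "n > 0"
  have "(invn n :: 'a) * (u * y) = (invn n * u) * y" by (simp only: mult.assoc)
  also have "\<dots> = (u * invn n) * y" using invn_comm[OF n, of u] by simp
  finally show ?thesis by (simp only: mult.assoc)
qed

lemma inv_unique: "of_nat k * (u::'a) = 1 \<Longrightarrow> v * of_nat k = 1 \<Longrightarrow> u = v"
  by (metis mult.assoc mult_1_left mult_1_right)

lemma invn_mult: "m > 0 \<Longrightarrow> n > 0 \<Longrightarrow> (invn (m * n) :: 'a) = invn m * invn n"
proof -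
  assume m: "m > 0" and n: "n > 0"
  have "(invn m * invn n) * of_nat (m * n) = (1::'a)"
  proof -
    have "(invn m * invn n) * (of_nat (m * n)::'a) = invn m * (invn n * of_nat n) * of_nat m"
      by (simp only: of_nat_mult mult.assoc mult_of_nat_commute[of m "of_nat n"] mult_of_nat_commute[of m "invn n * of_nat n"])
    also have "\<dots> = 1" using invn_r[OF n] invn_r[OF m] by simp
    finally show ?thesis .
  qed
  moreover have l: "of_nat (m*n) * (invn (m*n) :: 'a) = 1" using invn_l[of "m*n"] m n by (simp only: mult_pos_pos)
  ultimately show ?thesis using inv_unique by blast
qed

lemma invn_1[simp]: "(invn 1 :: 'a) = 1"
  using invn_l[of 1] by simp

lemma invn_coef: "a > 0 \<Longrightarrow> b > 0 \<Longrightarrow> c > 0 \<Longrightarrow> n = a * b * c \<Longrightarrow>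
   (invn n :: 'a) * of_nat c = invn a * invn b"
  by (simp add: invn_mult mult.assoc invn_r)

lemma additive_invn:
  fixes \<phi> :: "'a \<Rightarrow> 'a"
  assumes add: "\<And>a b. \<phi> (a + b) = \<phi> a + \<phi> b" and n: "n > 0"
  shows "\<phi> (invn n * x) = invn n * \<phi> (x::'a)"
proof -
  have x: "x = of_nat n * (invn n * x)" by (simp only: mult.assoc[symmetric] invn_l[OF n] mult_1_left)
  have "invn n * \<phi> x = invn n * \<phi> (of_nat n * (invn n * x))" using x by metis
  also have "\<dots> = invn n * (of_nat n * \<phi> (invn n * x))" by (simp only: additive_basics(5)[OF add])
  also have "\<dots> = (invn n * of_nat n) * \<phi> (invn n * x)" by (simp only: mult.assoc)
  also have "\<dots> = \<phi> (invn n * x)" by (simp only: invn_r[OF n] mult_1_left)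
  finally show ?thesis by simp
qed

end



context cbv
begin

definition fsums :: "(nat \<Rightarrow> 'a) \<Rightarrow> 'a \<Rightarrow> bool" where
  "fsums f s \<longleftrightarrow> fconv F (\<lambda>n. \<Sum>k<n. f k) s"

definition null :: "(nat \<Rightarrow> 'a) \<Rightarrow> bool" where
  "null f \<longleftrightarrow> (\<forall>i. \<exists>N. \<forall>k\<ge>N. f k \<in> F i)"

lemma psum_diff: "m \<le> n \<Longrightarrow> (\<Sum>k<n. f k :: 'a) - (\<Sum>k<m. f k) = (\<Sum>k\<in>{m..<n}. f (k::nat)) "
  using sum_diff_nat_ivl[of 0 m n f] by (simp add: atLeast0LessThan)

lemma fconv_unique: "fconv F x s \<Longrightarrow> fconv F x t \<Longrightarrow> s = t"
proof -
  assume a: "fconv F x s" "fconv F x t"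
  have "s - t \<in> F i" for i
  proof -
    obtain N1 where N1: "\<forall>n\<ge>N1. x n - s \<in> F i" using a(1) unfolding fconv_def by blast
    obtain N2 where N2: "\<forall>n\<ge>N2. x n - t \<in> F i" using a(2) unfolding fconv_def by blast
    have h1: "x (N1+N2) - t \<in> F i" using N2 by simp
    have h2: "x (N1+N2) - s \<in> F i" using N1 by simp
    have "(x (N1+N2) - t) - (x (N1+N2) - s) \<in> F i"
      using sub_diff[OF Fsub h1 h2] .
    then show ?thesis by simp
  qed
  then have "s - t = 0" by (rule zero_only)
  then show ?thesis by simp
qed

lemma fsums_unique: "fsums f s \<Longrightarrow> fsums f t \<Longrightarrow> s = t"
  unfolding fsums_def by (rule fconv_unique)

lemma fsums_suminf: "fsums f s \<Longrightarrow> fsuminf F f = s"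
  unfolding fsuminf_def
  by (rule the_equality) (auto simp: fsums_def[symmetric] intro: fsums_unique)

lemma null_fsums: assumes "null f" shows "fsums f (fsuminf F f)"
proof -
  have "fcauchy F (\<lambda>n. \<Sum>k<n. f k)"
    unfolding fcauchy_def
  proof
    fix i
    obtain N where N: "\<forall>k\<ge>N. f k \<in> F i" using assms unfolding null_def by blast
    have le: "(\<Sum>k<m. f k) - (\<Sum>k<n. f k) \<in> F i" if "N \<le> n" "n \<le> m" for m n
      using psum_diff[OF that(2)] sum_in_sub[OF Fsub, of "{n..<m}" f i] N that by auto
    have "(\<Sum>k<m. f k) - (\<Sum>k<n. f k) \<in> F i" if "N \<le> n" "N \<le> m" for m n
    proof (cases "n \<le> m")
      case True then show ?thesis using le that by blast
    next
      case False
      then have "(\<Sum>k<n. f k) - (\<Sum>k<m. f k) \<in> F i" using le that by simp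
      from sub_uminus[OF Fsub this] show ?thesis by simp
    qed
    then show "\<exists>N. \<forall>m\<ge>N. \<forall>n\<ge>N. (\<Sum>k<m. f k) - (\<Sum>k<n. f k) \<in> F i" by blast
  qed
  then obtain s where "fsums f s" using complete unfolding fsums_def by blast
  then show ?thesis using fsums_suminf by simp
qed

lemma nullI: "(\<And>k. f k \<in> F k) \<Longrightarrow> null f"
  unfolding null_def using FmonoI by blast

lemma fconv_closed: assumes "fconv F x s" "\<And>n. x n \<in> F i" shows "s \<in> F i"
proof -
  obtain N where "\<forall>n\<ge>N. x n - s \<in> F i" using assms(1) unfolding fconv_def by blast
  then have "x N - (x N - s) \<in> F i" using assms(2) sub_diff[OF Fsub] by blast
  then show ?thesis by simp
qed

lemma fsums_closed: "fsums f s \<Longrightarrow> (\<And>k. f k \<in> F i) \<Longrightarrow> s \<in> F i"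
  unfolding fsums_def by (erule fconv_closed) (rule sum_in_sub[OF Fsub])

lemma G0_closed: assumes "fconv F x s" "\<And>n. x n \<in> G 0" shows "s \<in> G 0"
proof -
  obtain e y where ey: "e \<in> G 0" "y \<in> G 1" "s = e + y" using Gdec by blast
  have "y \<in> F i" for i
  proof -
    obtain N where "\<forall>n\<ge>N. x n - s \<in> F i" using assms(1) unfolding fconv_def by blast
    then have "x N - s \<in> F i" by blast
    then obtain e' y' where e': "e' \<in> G 0 \<inter> F i" "y' \<in> G 1 \<inter> F i" "x N - s = e' + y'"
      using Fdec by blast
    have "x N - e - e' = y + y'" using e'(3) ey(3) by (simp add: algebra_simps)
    moreover have "x N - e - e' \<in> G 0" using assms(2) ey e' sub_diff[OF G0sub] by blast
    moreover have "y + y' \<in> G 1" using ey e' sub_add[OF G1sub] by blast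
    ultimately have "y + y' = 0" using Gdisj by auto
    then have "y = - y'" by (simp add: eq_neg_iff_add_eq_0)
    then show ?thesis using e' sub_uminus[OF Fsub] by blast
  qed
  then have "y = 0" by (rule zero_only)
  then show ?thesis using ey by simp
qed

lemma fsums_G0: "fsums f s \<Longrightarrow> (\<And>k. f k \<in> G 0) \<Longrightarrow> s \<in> G 0"
  unfolding fsums_def by (erule G0_closed) (rule sum_in_sub[OF G0sub])

lemma fsums_add: assumes "fsums f s" "fsums g t" shows "fsums (\<lambda>k. f k + g k) (s + t)"
  unfolding fsums_def fconv_def
proof
  fix i
  obtain N1 where N1: "\<forall>n\<ge>N1. (\<Sum>k<n. f k) - s \<in> F i" using assms(1) unfolding fsums_def fconv_def by blast
  obtain N2 where N2: "\<forall>n\<ge>N2. (\<Sum>k<n. g k) - t \<in> F i" using assms(2) unfolding fsums_def fconv_def by blast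
  have "(\<Sum>k<n. f k + g k) - (s + t) \<in> F i" if "n \<ge> N1 + N2" for n
  proof -
    have "(\<Sum>k<n. f k + g k) - (s + t) = ((\<Sum>k<n. f k) - s) + ((\<Sum>k<n. g k) - t)"
      by (simp add: sum.distrib algebra_simps)
    then show ?thesis using N1 N2 that sub_add[OF Fsub] by (metis add_leD1 add_leD2)
  qed
  then show "\<exists>N. \<forall>n\<ge>N. (\<Sum>k<n. f k + g k) - (s + t) \<in> F i" by blast
qed

lemma fsums_map:
  assumes add: "\<And>a b. \<phi> (a + b) = \<phi> a + \<phi> b" and filt: "\<And>i x. x \<in> F i \<Longrightarrow> \<phi> x \<in> F i"
    and "fsums f s"
  shows "fsums (\<lambda>k. \<phi> (f k)) (\<phi> s)"
  unfolding fsums_def fconv_def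
proof
  fix i
  obtain N where N: "\<forall>n\<ge>N. (\<Sum>k<n. f k) - s \<in> F i" using assms(3) unfolding fsums_def fconv_def by blast
  have "(\<Sum>k<n. \<phi> (f k)) - \<phi> s = \<phi> ((\<Sum>k<n. f k) - s)" for n
    using additive_basics[OF add] by (simp add: additive_basics(4)[OF add, symmetric])
  then show "\<exists>N. \<forall>n\<ge>N. (\<Sum>k<n. \<phi> (f k)) - \<phi> s \<in> F i" using N filt by metis
qed

lemma fsums_uminus: "fsums f s \<Longrightarrow> fsums (\<lambda>k. - f k) (- s)"
  by (rule fsums_map[where \<phi>=uminus]) (auto intro: sub_uminus[OF Fsub])

lemma fsums_diff: "fsums f s \<Longrightarrow> fsums g t \<Longrightarrow> fsums (\<lambda>k. f k - g k) (s - t)"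
  using fsums_add[OF _ fsums_uminus, of f s g t] by simp

lemma fsums_multL: "fsums f s \<Longrightarrow> fsums (\<lambda>k. u * f k) (u * s)"
  by (rule fsums_map[where \<phi>="\<lambda>x. u * x"]) (auto simp: distrib_left dest: Fmult[OF F0I, of _ _ u])

lemma fsums_multR: "fsums f s \<Longrightarrow> fsums (\<lambda>k. f k * u) (s * u)"
  by (rule fsums_map[where \<phi>="\<lambda>x. x * u"]) (auto simp: distrib_right dest: Fmult[OF _ F0I, of _ _ u])

lemma fsums_shift: assumes "f 0 = 0" "fsums (\<lambda>k. f (Suc k)) s" shows "fsums f s"
  unfolding fsums_def fconv_def
proof
  fix i
  obtain N where N: "\<forall>n\<ge>N. (\<Sum>k<n. f (Suc k)) - s \<in> F i" using assms(2) unfolding fsums_def fconv_def by blast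
  have "(\<Sum>k<n. f k) - s \<in> F i" if "n \<ge> Suc N" for n
  proof -
    define m where "m = n - 1"
    have m: "n = Suc m" "m \<ge> N" using that unfolding m_def by auto
    have "(\<Sum>k<n. f k) = (\<Sum>k<m. f (Suc k))" by (simp only: m(1) sum.lessThan_Suc_shift assms(1) add_0)
    then show ?thesis using N m by simp
  qed
  then show "\<exists>N. \<forall>n\<ge>N. (\<Sum>k<n. f k) - s \<in> F i" by blast
qed

lemma fsums_cong: assumes "fsums f s" "\<And>k. f k = g k" shows "fsums g s"
proof -
  have "f = g" using assms(2) by (rule ext)
  then show ?thesis using assms(1) by simp
qed

lemma fsums_tail: assumes "fsums f s" "\<And>k. f k \<in> F k" shows "s - (\<Sum>k<N. f k) \<in> F N"
proof -
  obtain M0 where M0: "\<forall>n\<ge>M0. (\<Sum>k<n. f k) - s \<in> F N" using assms(1) unfolding fsums_def fconv_def by blast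
  define M where "M = M0 + N"
  have "(\<Sum>k<M. f k) - (\<Sum>k<N. f k) \<in> F N"
    using psum_diff[of N M f] sum_in_sub[OF Fsub, of "{N..<M}" f N] assms(2) FmonoI
    unfolding M_def by auto
  moreover have "(\<Sum>k<M. f k) - s \<in> F N" using M0 M_def by simp
  ultimately have "((\<Sum>k<M. f k) - (\<Sum>k<N. f k)) - ((\<Sum>k<M. f k) - s) \<in> F N"
    using sub_diff[OF Fsub] by blast
  then show ?thesis by simp
qed

end



context cbv
begin

lemma cauchy_prod:
  fixes m :: "'a \<Rightarrow> 'a \<Rightarrow> 'a"
  assumes addL: "\<And>a b c. m (a + b) c = m a c + m b c"
    and addR: "\<And>a b c. m a (b + c) = m a b + m a c"
    and filt: "\<And>i j x y. x \<in> F i \<Longrightarrow> y \<in> F j \<Longrightarrow> m x y \<in> F (i + j)"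
    and fa: "fsums a A" "\<And>k. a k \<in> F k" and fb: "fsums b B" "\<And>k. b k \<in> F k"
  shows "fsums (\<lambda>n. \<Sum>i\<le>n. m (a i) (b (n - i))) (m A B)"
  unfolding fsums_def fconv_def
proof
  fix i
  have L: "m (x - y) z = m x z - m y z" for x y z
    using additive_basics(3)[of "\<lambda>x. m x z"] addL by blast
  have R: "m z (x - y) = m z x - m z y" for x y z
    using additive_basics(3)[of "\<lambda>x. m z x"] addR by blast
  have sL: "m (sum f S) z = (\<Sum>p\<in>S. m (f p) z)" for f S z
    using additive_basics(4)[of "\<lambda>x. m x z"] addL by blast
  have sR: "m z (sum f S) = (\<Sum>p\<in>S. m z (f p))" for f S z
    using additive_basics(4)[of "\<lambda>x. m z x"] addR by blast
  have main: "(\<Sum>k<n. \<Sum>j\<le>k. m (a j) (b (k - j))) - m A B \<in> F n" for n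
  proof -
    define An where "An = (\<Sum>k<n. a k)"
    define Bn where "Bn = (\<Sum>k<n. b k)"
    define g where "g = (\<lambda>(p, q). m (a p) (b q))"
    define S where "S = {..<n} \<times> {..<n}"
    define T where "T = {(p, q). p + q < n}"
    have P: "(\<Sum>k<n. \<Sum>j\<le>k. m (a j) (b (k - j))) = sum g T"
      unfolding g_def T_def by (rule sum.triangle_reindex[symmetric])
    have "m An Bn = (\<Sum>p<n. m (a p) Bn)" by (simp only: An_def sL)
    also have "\<dots> = (\<Sum>p<n. \<Sum>q<n. m (a p) (b q))" by (simp only: Bn_def sR)
    also have "\<dots> = sum g S" unfolding S_def g_def by (rule sum.cartesian_product)
    finally have AB: "m An Bn = sum g S" .
    have TS: "T \<subseteq> S" unfolding T_def S_def by auto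
    have fin: "finite S" unfolding S_def by simp
    have "sum g S = sum g (S - T) + sum g T" using sum.subset_diff[OF TS fin] .
    then have d1: "m An Bn - sum g T = sum g (S - T)" using AB by simp
    have d1F: "sum g (S - T) \<in> F n"
    proof (rule sum_in_sub[OF Fsub])
      fix x assume "x \<in> S - T"
      then obtain p q where x: "x = (p, q)" "p + q \<ge> n" unfolding S_def T_def by auto
      have "m (a p) (b q) \<in> F (p + q)" using filt fa(2) fb(2) by blast
      then show "g x \<in> F n" using x FmonoI unfolding g_def by auto
    qed
    have tA: "A - An \<in> F n" using fsums_tail[OF fa] An_def by simp
    have tB: "B - Bn \<in> F n" using fsums_tail[OF fb] Bn_def by simp
    have e1: "m (A - An) B \<in> F n" using filt[OF tA F0I] by simp
    have e2: "m An (B - Bn) \<in> F n" using filt[OF F0I tB] by simp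
    have "m A B - sum g T = m (A - An) B + m An (B - Bn) + (m An Bn - sum g T)"
      by (simp add: L R)
    also have "\<dots> \<in> F n" using e1 e2 d1F d1 sub_add[OF Fsub] by simp
    finally have "m A B - sum g T \<in> F n" .
    from sub_uminus[OF Fsub this] show ?thesis using P by simp
  qed
  show "\<exists>N. \<forall>n\<ge>N. (\<Sum>k<n. \<Sum>j\<le>k. m (a j) (b (k - j))) - m A B \<in> F i"
    using main FmonoI by blast
qed

end



lemma pascal_sum:
  fixes Z :: "nat \<Rightarrow> 'a::ring_1"
  shows "(\<Sum>i<Suc n. of_nat (Suc n choose Suc i) * Z i)
       = Z 0 + (\<Sum>i<n. of_nat (n choose Suc i) * Z (Suc i)) + (\<Sum>i<n. of_nat (n choose Suc i) * Z i)"
proof -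
  have "(\<Sum>i<Suc n. of_nat (Suc n choose Suc i) * Z i)
      = (\<Sum>i<Suc n. of_nat (n choose i) * Z i) + (\<Sum>i<Suc n. of_nat (n choose Suc i) * Z i)"
    by (simp add: sum.distrib distrib_right)
  also have "(\<Sum>i<Suc n. of_nat (n choose i) * Z i) = Z 0 + (\<Sum>i<n. of_nat (n choose Suc i) * Z (Suc i))"
    by (simp only: sum.lessThan_Suc_shift) simp
  also have "(\<Sum>i<Suc n. of_nat (n choose Suc i) * Z i) = (\<Sum>i<n. of_nat (n choose Suc i) * Z i)"
    by (simp add: binomial_eq_0)
  finally show ?thesis .
qed

locale cbvr = cbv G F br d for G F :: "nat \<Rightarrow> 'a::ring_1 set" and br d +
  fixes r :: 'a
  assumes rF: "r \<in> F 1" and rG: "r \<in> G 1"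
begin

abbreviation Dn :: "nat \<Rightarrow> 'a \<Rightarrow> 'a" where "Dn n \<equiv> (br r) ^^ n"

lemma G_of_nat: "x \<in> G p \<Longrightarrow> p < 2 \<Longrightarrow> of_nat n * x \<in> G p"
proof -
  assume "x \<in> G p" "p < 2"
  then have "add_subgroup (G p)" using G0sub G1sub by (cases p) auto
  then show ?thesis using sub_of_nat \<open>x \<in> G p\<close> by blast
qed

lemma invn_G0: assumes n: "n > 0" shows "(invn n :: 'a) \<in> G 0"
proof -
  obtain e y where ey: "e \<in> G 0" "y \<in> G 1" "(invn n :: 'a) = e + y" using Gdec by blast
  have "of_nat n * y \<in> G 1" using G_of_nat[OF ey(2)] by simp
  moreover have "of_nat n * y = 1 - of_nat n * e"
    using invn_l[OF n] ey(3) by (simp add: distrib_left algebra_simps)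
  moreover have "1 - of_nat n * e \<in> G 0" using sub_diff[OF G0sub one_G0 G_of_nat[OF ey(1)]] by simp
  ultimately have "of_nat n * y \<in> G 0 \<inter> G 1" by simp
  then have "of_nat n * y = 0" using Gdisj by blast
  then have "invn n * (of_nat n * y) = 0" by simp
  then have "y = 0" using invn_r[OF n] by (simp add: mult.assoc[symmetric])
  then show ?thesis using ey by simp
qed

lemma G0_mult: "a \<in> G 0 \<Longrightarrow> b \<in> G 0 \<Longrightarrow> a * b \<in> G 0"
  using Gmult[of 0 0 a b] by simp

lemma invn_mult_G0: "n > 0 \<Longrightarrow> x \<in> G 0 \<Longrightarrow> invn n * x \<in> G 0"
  using G0_mult invn_G0 by blast

lemma central: assumes a: "a \<in> G 0" shows "a * b = b * a"
proof -
  obtain b0 b1 where b: "b0 \<in> G 0" "b1 \<in> G 1" "b = b0 + b1" using Gdec by blast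
  have "a * b0 = b0 * a" using Gcomm[of 0 0 a b0] a b by simp
  moreover have "a * b1 = b1 * a" using Gcomm[of 0 1 a b1] a b by simp
  ultimately show ?thesis using b by (simp add: distrib_left distrib_right)
qed

lemma D_add: "br r (a + b) = br r a + br r b" by (rule br_addR)

lemma Dn_add: "Dn n (a + b) = Dn n a + Dn n b"
  by (induction n) (auto simp: D_add)

lemma D_F: "x \<in> F i \<Longrightarrow> br r x \<in> F (Suc i)"
  using Fbr[OF rF] by simp

lemma Dn_F: "x \<in> F i \<Longrightarrow> Dn n x \<in> F (i + n)"
  by (induction n) (auto dest: D_F)

lemma D_G0: "x \<in> G 0 \<Longrightarrow> br r x \<in> G 0"
  using br_G[of 1 0 r x] rG by simp

lemma Dn_G0: "x \<in> G 0 \<Longrightarrow> Dn n x \<in> G 0"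
  by (induction n) (auto intro: D_G0)

lemma dr_G0: "d r \<in> G 0" using d_G[of 1 r] rG by simp
lemma dr_F: "d r \<in> F 1" using Fd[OF rF] .

lemma d_D: "d (br r b) = br (d r) b + br r (d b)"
proof -
  have bv_r: "- br r b = - d (r * b) + d r * b - r * d b" for b
    using bv[of 1 r b] rG by simp
  have bv_dr: "br (d r) b = - d (d r * b) + d (d r) * b + d r * d b" for b
    using bv[of 0 "d r" b] dr_G0 by simp
  note dadd = additive_basics[where \<phi>=d, OF d_add]
  have "- d (br r b) = d (- br r b)" using dadd(2) by simp
  also have "\<dots> = - d (d (r * b)) + d (d r * b) - d (r * d b)"
    using bv_r[of b] dadd by simp
  also have "d (d r * b) = d r * d b - br (d r) b" using bv_dr[of b] dd by (simp add: algebra_simps)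
  also have "d (r * d b) = d r * d b + br r (d b)" using bv_r[of "d b"] dd by (simp add: algebra_simps)
  finally have "- d (br r b) = - br (d r) b - br r (d b)" using dd by (simp add: algebra_simps)
  then show ?thesis by (simp add: algebra_simps)
qed

lemma D_br_even: "x \<in> G 0 \<Longrightarrow> br r (br x y) = br (br r x) y + br x (br r y)"
  using br_jac[of 1 0 r x y] rG by simp

lemma br_sym_even: "x \<in> G 0 \<Longrightarrow> y \<in> G 0 \<Longrightarrow> br x y = br y x"
  using br_sym[of 0 0 x y] by simp

lemma br_leib_even: "a \<in> G 0 \<Longrightarrow> b \<in> G 0 \<Longrightarrow> br a (b * c) = br a b * c + b * br a c"
  using br_leib[of 0 0 a b c] by simp

lemma bv_even: "a \<in> G 0 \<Longrightarrow> d (a * b) = d a * b + a * d b - br a b"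
  using bv[of 0 a b] by (simp add: algebra_simps)

lemma br_mult_left_even:
  assumes a: "a \<in> G 0" and b: "b \<in> G 0"
  shows "br (a * b) y = br a y * b + a * br b y"
proof -
  have hom: "br (a * b) y = br a y * b + a * br b y" if q: "q < 2" "y \<in> G q" for q y
  proof -
    have ab: "a * b \<in> G 0" using G0_mult a b by blast
    have s1: "br x y = (-1) ^ q * br y x" if "x \<in> G 0" for x
      using br_sym[of 0 q x y] q that by (cases "q = 0") auto
    have l: "br y (a * b) = br y a * b + a * br y b"
      using br_leib[of q 0 y a b] q a by simp
    have "br (a * b) y = (-1) ^ q * (br y a * b + a * br y b)" using s1[OF ab] l by simp
    also have "\<dots> = ((-1) ^ q * br y a) * b + a * ((-1) ^ q * br y b)"
    proof (cases "q = 0")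
      case True then show ?thesis by (simp add: distrib_left)
    next
      case False then have "q = 1" using q by simp
      then show ?thesis by (simp add: distrib_left)
    qed
    finally show ?thesis using s1[OF a] s1[OF b] by simp
  qed
  obtain y0 y1 where y: "y0 \<in> G 0" "y1 \<in> G 1" "y = y0 + y1" using Gdec by blast
  show ?thesis using hom[of 0 y0] hom[of 1 y1] y by (simp add: br_addR distrib_left distrib_right)
qed

end



context cbvr
begin

lemma D_of_nat: "br r (of_nat k * x) = of_nat k * br r x"
  using additive_basics(5)[where \<phi>="br r", OF D_add] .
lemma D_sum: "br r (sum f A) = (\<Sum>i\<in>A. br r (f i))"
  using additive_basics(4)[where \<phi>="br r", OF D_add] .
lemma Dn_invn: "k > 0 \<Longrightarrow> Dn n (invn k * x) = invn k * Dn n x"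
  using additive_invn[where \<phi>="Dn n", OF Dn_add] by blast
lemma d_invn: "k > 0 \<Longrightarrow> d (invn k * x) = invn k * d x"
  using additive_invn[where \<phi>="d", OF d_add] by blast
lemma brL_invn: "k > 0 \<Longrightarrow> br (invn k * x) y = invn k * br x y"
  using additive_invn[where \<phi>="\<lambda>x. br x y", OF br_addL] by blast
lemma brR_invn: "k > 0 \<Longrightarrow> br y (invn k * x) = invn k * br y x"
  using additive_invn[where \<phi>="\<lambda>x. br y x", OF br_addR] by blast
lemma Dn_zero: "Dn n 0 = 0"
  using additive_basics(1)[where \<phi>="Dn n", OF Dn_add] .
lemma d_sum: "d (sum f A) = (\<Sum>i\<in>A. d (f i))"
  using additive_basics(4)[where \<phi>="d", OF d_add] .
lemma d_zero: "d 0 = 0"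
  using additive_basics(1)[where \<phi>="d", OF d_add] .
lemma d_diff: "d (a - b) = d a - d b"
  using additive_basics(3)[where \<phi>="d", OF d_add] .

lemma dD: "d (Dn n x) = Dn n (d x)
   + (\<Sum>i<n. of_nat (n choose Suc i) * br (Dn i (d r)) (Dn (n - Suc i) x))"
proof (induction n)
  case 0
  then show ?case by simp
next
  case (Suc n)
  define Z where "Z i = br (Dn i (d r)) (Dn (n - i) x)" for i
  have XG: "Dn i (d r) \<in> G 0" for i using Dn_G0[OF dr_G0] .
  have "d (Dn (Suc n) x) = d (br r (Dn n x))" by simp
  also have "\<dots> = br (d r) (Dn n x) + br r (d (Dn n x))" by (rule d_D)
  also have "br r (d (Dn n x)) = Dn (Suc n) (d x)
     + (\<Sum>i<n. of_nat (n choose Suc i) * br r (br (Dn i (d r)) (Dn (n - Suc i) x)))"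
    unfolding Suc by (simp add: D_add D_sum D_of_nat)
  also have "(\<Sum>i<n. of_nat (n choose Suc i) * br r (br (Dn i (d r)) (Dn (n - Suc i) x)))
     = (\<Sum>i<n. of_nat (n choose Suc i) * Z (Suc i)) + (\<Sum>i<n. of_nat (n choose Suc i) * Z i)"
  proof -
    have "br r (br (Dn i (d r)) (Dn (n - Suc i) x)) = Z (Suc i) + Z i" if "i < n" for i
    proof -
      have "Suc (n - Suc i) = n - i" using that by simp
      then have "br r (Dn (n - Suc i) x) = Dn (n - i) x" by (metis funpow.simps(2) o_apply)
      then show ?thesis unfolding Z_def using D_br_even[OF XG] by simp
    qed
    then show ?thesis by (simp add: distrib_left sum.distrib)
  qed
  finally have "d (Dn (Suc n) x) = Dn (Suc n) (d x) + (Z 0 + (\<Sum>i<n. of_nat (n choose Suc i) * Z (Suc i))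
      + (\<Sum>i<n. of_nat (n choose Suc i) * Z i))"
    unfolding Z_def by (simp add: algebra_simps)
  also have "Z 0 + (\<Sum>i<n. of_nat (n choose Suc i) * Z (Suc i)) + (\<Sum>i<n. of_nat (n choose Suc i) * Z i)
     = (\<Sum>i<Suc n. of_nat (Suc n choose Suc i) * Z i)" by (rule pascal_sum[symmetric])
  also have "\<dots> = (\<Sum>i<Suc n. of_nat (Suc n choose Suc i) * br (Dn i (d r)) (Dn (Suc n - Suc i) x))"
    unfolding Z_def by simp
  finally show ?case .
qed

end



context cbvr
begin

definition X :: "nat \<Rightarrow> 'a" where "X i = Dn i (d r)"
definition alpha :: "nat \<Rightarrow> 'a" where "alpha i = invn (fact (Suc i)) * X i"
definition c :: 'a where "c = fsuminf F alpha"
definition beta :: "'a \<Rightarrow> nat \<Rightarrow> 'a" where "beta a j = invn (fact j) * Dn j a"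
definition ea :: "'a \<Rightarrow> 'a" where "ea a = fsuminf F (beta a)"
definition E :: 'a where "E = fsuminf F (\<lambda>m. invn (fact m) * c ^ m)"

lemma X_F: "X i \<in> F (Suc i)" unfolding X_def using Dn_F[OF dr_F] by simp
lemma X_G: "X i \<in> G 0" unfolding X_def using Dn_G0[OF dr_G0] .
lemma alpha_F: "alpha i \<in> F (Suc i)" unfolding alpha_def using Fmult[OF F0I X_F] by simp
lemma alpha_F': "alpha i \<in> F i" using alpha_F FmonoI by (meson le_SucI order_refl)
lemma alpha_G: "alpha i \<in> G 0" unfolding alpha_def using invn_mult_G0[OF _ X_G] by simp
lemma c_sums: "fsums alpha c" unfolding c_def using null_fsums[OF nullI[OF alpha_F']] .
lemma c_F: "c \<in> F 1"
  using fsums_closed[OF c_sums] alpha_F FmonoI by (metis Suc_eq_plus1 le_add2 plus_1_eq_Suc)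
lemma c_G: "c \<in> G 0" using fsums_G0[OF c_sums alpha_G] .
lemma beta_F: "beta a j \<in> F j" unfolding beta_def using Fmult[OF F0I Dn_F[OF F0I]] by simp
lemma ea_sums: "fsums (beta a) (ea a)" unfolding ea_def using null_fsums[OF nullI[OF beta_F]] .
lemma cpow_F: "c ^ m \<in> F m"
  by (induction m) (auto dest: Fmult[OF c_F])
lemma cpow_G: "c ^ m \<in> G 0"
  by (induction m) (auto simp: one_G0 intro: G0_mult c_G)
lemma E_sums: "fsums (\<lambda>m. invn (fact m) * c ^ m) E"
  unfolding E_def by (rule null_fsums, rule nullI) (use Fmult[OF F0I cpow_F] in simp)
lemma E_G: "E \<in> G 0" using fsums_G0[OF E_sums] invn_mult_G0[OF _ cpow_G] by simp

lemma fact_pos': "(0::nat) < fact n" by simp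

lemma coef1: "i \<le> N \<Longrightarrow> (invn (fact (Suc N)) :: 'a) * of_nat (Suc N choose Suc i)
    = invn (fact (Suc i)) * invn (fact (N - i))"
  by (rule invn_coef) (use binomial_fact_lemma[of "Suc i" "Suc N"] in auto)

lemma coef2: "i \<le> N \<Longrightarrow> (invn (fact (Suc (Suc N))) :: 'a) * of_nat (Suc (Suc N) choose Suc i)
    = invn (fact (Suc i)) * invn (fact (Suc (N - i)))"
  by (rule invn_coef) (use binomial_fact_lemma[of "Suc i" "Suc (Suc N)"] in \<open>auto simp: Suc_diff_le\<close>)

lemma coef3: "(invn (fact (Suc k)) :: 'a) * of_nat (Suc k) = invn (fact k)"
proof -
  have "(invn (fact (Suc k)) :: 'a) * of_nat (Suc k) = invn 1 * invn (fact k)"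
    by (rule invn_coef) auto
  then show ?thesis by (simp only: invn_1 mult_1_left)
qed

lemma coef4: "(invn (fact (Suc (Suc k))) :: 'a) * of_nat (Suc (Suc k) choose 2) = invn 2 * invn (fact k)"
  by (rule invn_coef) (use binomial_fact_lemma[of 2 "Suc (Suc k)"] in \<open>auto simp: numeral_2_eq_2\<close>)

end



context cbvr
begin

lemma d_ea: "d (ea a) = ea (d a) + br c (ea a)"
proof -
  have s1: "fsums (\<lambda>k. d (beta a k)) (d (ea a))" by (rule fsums_map[OF d_add Fd ea_sums])
  define t2 where "t2 k = invn (fact k) * (\<Sum>i<k. of_nat (k choose Suc i) * br (X i) (Dn (k - Suc i) a))" for k
  have tm: "d (beta a k) = beta (d a) k + t2 k" for k
    unfolding beta_def t2_def using d_invn dD[of k a] by (simp add: distrib_left X_def)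
  have cp: "fsums (\<lambda>N. \<Sum>i\<le>N. br (alpha i) (beta a (N - i))) (br c (ea a))"
    by (rule cauchy_prod[OF br_addL br_addR Fbr c_sums alpha_F' ea_sums beta_F])
  have t2s: "t2 (Suc N) = (\<Sum>i\<le>N. br (alpha i) (beta a (N - i)))" for N
  proof -
    have "t2 (Suc N) = (\<Sum>i\<le>N. invn (fact (Suc N)) * (of_nat (Suc N choose Suc i) * br (X i) (Dn (N - i) a)))"
      unfolding t2_def by (simp add: sum_distrib_left lessThan_Suc_atMost)
    also have "\<dots> = (\<Sum>i\<le>N. br (alpha i) (beta a (N - i)))"
    proof (rule sum.cong[OF refl])
      fix i assume "i \<in> {..N}" then have i: "i \<le> N" by simp
      have "br (alpha i) (beta a (N - i)) = invn (fact (Suc i)) * (invn (fact (N - i)) * br (X i) (Dn (N-i) a))"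
        unfolding alpha_def beta_def
        by (simp only: brL_invn[OF fact_pos'] brR_invn[OF fact_pos'] invn_swap[OF fact_pos', of "N - i"])
      also have "\<dots> = (invn (fact (Suc N)) * of_nat (Suc N choose Suc i)) * br (X i) (Dn (N-i) a)"
        using coef1[OF i] by (simp add: mult.assoc)
      finally show "invn (fact (Suc N)) * (of_nat (Suc N choose Suc i) * br (X i) (Dn (N - i) a))
          = br (alpha i) (beta a (N - i))" by (simp add: mult.assoc)
    qed
    finally show ?thesis .
  qed
  have "fsums t2 (br c (ea a))"
  proof (rule fsums_shift)
    show "t2 0 = 0" unfolding t2_def by simp
    show "fsums (\<lambda>k. t2 (Suc k)) (br c (ea a))" using cp t2s by simp
  qed
  from fsums_add[OF ea_sums[of "d a"] this]
  have "fsums (\<lambda>k. d (beta a k)) (ea (d a) + br c (ea a))" using tm by simp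
  then show ?thesis using fsums_unique[OF s1] by simp
qed

end



context cbvr
begin

lemma S_sym:
  fixes N :: nat
  defines "Z \<equiv> (\<lambda>i. br (X i) (X (N - i)))"
  shows "(\<Sum>i\<le>N. of_nat (Suc N choose Suc i) * Z i) = (\<Sum>i\<le>N. of_nat (Suc N choose i) * Z i)"
proof -
  have "(\<Sum>i\<le>N. of_nat (Suc N choose Suc i) * Z i) = (\<Sum>i\<in>{0..N}. of_nat (Suc N choose Suc i) * Z i)"
    by (simp add: atLeast0AtMost)
  also have "\<dots> = (\<Sum>i\<in>{0..N}. of_nat (Suc N choose Suc (N - i)) * Z (N - i))"
    using sum.atLeastAtMost_rev[of "\<lambda>i. of_nat (Suc N choose Suc i) * Z i" 0 N] by simp
  also have "\<dots> = (\<Sum>i\<in>{0..N}. of_nat (Suc N choose i) * Z i)"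
  proof (rule sum.cong[OF refl])
    fix i assume "i \<in> {0..N}" then have i: "i \<le> N" by simp
    have "Suc N choose Suc (N - i) = Suc N choose i"
      using binomial_symmetric[of i "Suc N"] i by (simp add: Suc_diff_le)
    moreover have "Z (N - i) = Z i" unfolding Z_def using i br_sym_even[OF X_G X_G] by simp
    ultimately show "of_nat (Suc N choose Suc (N - i)) * Z (N - i) = of_nat (Suc N choose i) * Z i" by simp
  qed
  finally show ?thesis by (simp add: atLeast0AtMost)
qed

lemma MC: "d c = invn 2 * br c c"
proof -
  have s1: "fsums (\<lambda>k. d (alpha k)) (d c)" by (rule fsums_map[OF d_add Fd c_sums])
  define w where "w k = invn (fact (Suc k)) * (\<Sum>i<k. of_nat (k choose Suc i) * br (X i) (X (k - Suc i)))" for k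
  have tm: "d (alpha k) = w k" for k
    unfolding alpha_def w_def using d_invn dD[of k "d r"] by (simp add: X_def dd Dn_zero)
  have cp: "fsums (\<lambda>N. \<Sum>i\<le>N. br (alpha i) (alpha (N - i))) (br c c)"
    by (rule cauchy_prod[OF br_addL br_addR Fbr c_sums alpha_F' c_sums alpha_F'])
  have cp2: "fsums (\<lambda>N. invn 2 * (\<Sum>i\<le>N. br (alpha i) (alpha (N - i)))) (invn 2 * br c c)"
    by (rule fsums_multL[OF cp])
  have ws: "w (Suc N) = invn 2 * (\<Sum>i\<le>N. br (alpha i) (alpha (N - i)))" for N
  proof -
    define Z where "Z i = br (X i) (X (N - i))" for i
    define S1 where "S1 = (\<Sum>i\<le>N. of_nat (Suc N choose Suc i) * Z i)"
    define FF where "FF = (invn (fact (Suc (Suc N))) :: 'a)"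
    have w1: "w (Suc N) = FF * S1"
      unfolding w_def S1_def Z_def FF_def by (simp add: lessThan_Suc_atMost)
    have S1': "S1 = (\<Sum>i\<le>N. of_nat (Suc N choose i) * Z i)"
      unfolding S1_def Z_def by (rule S_sym)
    have S2: "S1 + S1 = (\<Sum>i\<le>N. of_nat (Suc (Suc N) choose Suc i) * Z i)"
    proof -
      have "S1 + S1 = (\<Sum>i\<le>N. of_nat (Suc N choose i) * Z i) + (\<Sum>i\<le>N. of_nat (Suc N choose Suc i) * Z i)"
        using S1' S1_def by simp
      also have "\<dots> = (\<Sum>i\<le>N. of_nat (Suc (Suc N) choose Suc i) * Z i)"
        by (simp add: sum.distrib[symmetric] distrib_right)
      finally show ?thesis .
    qed
    have "(\<Sum>i\<le>N. br (alpha i) (alpha (N - i))) = (\<Sum>i\<le>N. FF * (of_nat (Suc (Suc N) choose Suc i) * Z i))"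
    proof (rule sum.cong[OF refl])
      fix i assume "i \<in> {..N}" then have i: "i \<le> N" by simp
      have "br (alpha i) (alpha (N - i)) = invn (fact (Suc i)) * (invn (fact (Suc (N - i))) * Z i)"
        unfolding alpha_def Z_def
        by (simp only: brL_invn[OF fact_pos'] brR_invn[OF fact_pos'] invn_swap[OF fact_pos', of "Suc (N - i)"])
      also have "\<dots> = (FF * of_nat (Suc (Suc N) choose Suc i)) * Z i"
        unfolding FF_def using coef2[OF i] by (simp add: mult.assoc)
      finally show "br (alpha i) (alpha (N - i)) = FF * (of_nat (Suc (Suc N) choose Suc i) * Z i)"
        by (simp add: mult.assoc)
    qed
    also have "\<dots> = FF * (S1 + S1)" using S2 by (simp add: sum_distrib_left)
    also have "\<dots> = of_nat 2 * (FF * S1)"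
      by (simp add: distrib_left mult_2)
    finally have "invn 2 * (\<Sum>i\<le>N. br (alpha i) (alpha (N - i))) = (invn 2 * of_nat 2) * (FF * S1)"
      by (simp add: mult.assoc)
    also have "\<dots> = FF * S1" using invn_r[of 2] by simp
    finally show ?thesis using w1 by simp
  qed
  have "fsums w (invn 2 * br c c)"
  proof (rule fsums_shift)
    show "w 0 = 0" unfolding w_def by simp
    show "fsums (\<lambda>k. w (Suc k)) (invn 2 * br c c)" using cp2 ws by simp
  qed
  then have "fsums (\<lambda>k. d (alpha k)) (invn 2 * br c c)" using tm by simp
  then show ?thesis using fsums_unique[OF s1] by simp
qed

end



context cbvr
begin

lemma zc2[simp]: "(0::nat) choose 2 = 0" "Suc 0 choose 2 = 0"
  by (simp_all add: numeral_2_eq_2)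

lemma br_one_R: "a \<in> G 0 \<Longrightarrow> br a 1 = 0"
  using br_leib_even[OF _ one_G0, of a 1] by simp

lemma br_one_L: "br 1 y = 0"
  using br_mult_left_even[OF one_G0 one_G0, of y] by simp

lemma d_one: "d 1 = 0"
  using bv_even[OF one_G0, of 1] br_one_R[OF one_G0] by simp

lemma c_cent: "c * y = y * c" using central[OF c_G] .
lemma cpow_cent: "c ^ m * y = y * c ^ m" using central[OF cpow_G] .

lemma c_shift: "c * (of_nat k * (c ^ j * y)) = of_nat k * (c ^ Suc j * y)"
proof -
  have "c * (of_nat k * (c ^ j * y)) = (c * of_nat k) * (c ^ j * y)" by (simp only: mult.assoc)
  also have "\<dots> = of_nat k * (c * c ^ j * y)" by (simp only: mult_of_nat_commute[symmetric] mult.assoc)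
  finally show ?thesis by simp
qed

lemma c_shift': assumes "0 < m" shows "c * (of_nat k * (c ^ (m - 1) * y)) = of_nat k * (c ^ m * y)"
proof -
  have e: "Suc (m - 1) = m" using assms by simp
  show ?thesis by (simp only: c_shift[of k "m - 1" y] e)
qed

lemma brR_cpow: "br c (c ^ m) = of_nat m * (c ^ (m - 1) * br c c)"
proof (induction m)
  case 0
  then show ?case using br_one_R[OF c_G] by simp
next
  case (Suc m)
  have "br c (c ^ Suc m) = br c c * c ^ m + c * br c (c ^ m)"
    using br_leib_even[OF c_G c_G] by simp
  also have "c * br c (c ^ m) = of_nat m * (c ^ m * br c c)"
  proof (cases m)
    case 0 then show ?thesis using br_one_R[OF c_G] by simp
  next
    case (Suc k)
    have "c * br c (c ^ m) = c * (of_nat m * (c ^ (m - 1) * br c c))" by (subst Suc.IH) (rule refl)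
    also have "\<dots> = of_nat m * (c ^ m * br c c)" using Suc by (intro c_shift') simp
    finally show ?thesis .
  qed
  also have "br c c * c ^ m = c ^ m * br c c" using cpow_cent by simp
  finally show ?case by (simp add: distrib_right)
qed

lemma brL_cpow: "br (c ^ m) y = of_nat m * (c ^ (m - 1) * br c y)"
proof (induction m)
  case 0
  then show ?case using br_one_L by simp
next
  case (Suc m)
  have "br (c ^ Suc m) y = br c y * c ^ m + c * br (c ^ m) y"
    using br_mult_left_even[OF c_G cpow_G] by simp
  also have "c * br (c ^ m) y = of_nat m * (c ^ m * br c y)"
  proof (cases m)
    case 0 then show ?thesis using br_one_L by simp
  next
    case (Suc k)
    have "c * br (c ^ m) y = c * (of_nat m * (c ^ (m - 1) * br c y))" by (subst Suc.IH) (rule refl)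
    also have "\<dots> = of_nat m * (c ^ m * br c y)" using Suc by (intro c_shift') simp
    finally show ?thesis .
  qed
  also have "br c y * c ^ m = c ^ m * br c y" using cpow_cent by simp
  finally show ?case by (simp add: distrib_right)
qed

lemma d_cpow: "d (c ^ m) = of_nat m * (c ^ (m - 1) * d c) - of_nat (m choose 2) * (c ^ (m - 2) * br c c)"
proof (induction m)
  case 0
  then show ?case using d_one by simp
next
  case (Suc m)
  have "d (c ^ Suc m) = d c * c ^ m + c * d (c ^ m) - br c (c ^ m)"
    using bv_even[OF c_G] by simp
  also have "d c * c ^ m = c ^ m * d c" using cpow_cent by simp
  also have "c * d (c ^ m) = of_nat m * (c ^ m * d c) - of_nat (m choose 2) * (c ^ (m - 1) * br c c)"
  proof -
    have "c * d (c ^ m) = c * (of_nat m * (c ^ (m - 1) * d c)) - c * (of_nat (m choose 2) * (c ^ (m - 2) * br c c))"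
      using Suc.IH by (simp add: right_diff_distrib)
    also have "c * (of_nat m * (c ^ (m - 1) * d c)) = of_nat m * (c ^ m * d c)"
    proof (cases "m = 0")
      case True then show ?thesis by simp
    next
      case False then show ?thesis by (intro c_shift') simp
    qed
    also have "c * (of_nat (m choose 2) * (c ^ (m - 2) * br c c)) = of_nat (m choose 2) * (c ^ (m - 1) * br c c)"
    proof (cases "m \<ge> 2")
      case True
      have e: "Suc (m - 2) = m - 1" using True by simp
      show ?thesis by (simp only: c_shift[of "m choose 2" "m - 2" "br c c"] e)
    next
      case False
      have z: "m choose 2 = 0" using False by (simp add: binomial_eq_0)
      show ?thesis by (simp add: z)
    qed
    finally show ?thesis .
  qed
  also have "br c (c ^ m) = of_nat m * (c ^ (m - 1) * br c c)" by (rule brR_cpow)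
  finally have "d (c ^ Suc m) = of_nat (Suc m) * (c ^ m * d c)
      - (of_nat (m choose 2) + of_nat m) * (c ^ (m - 1) * br c c)"
    by (simp add: algebra_simps)
  moreover have "Suc m choose 2 = (m choose 2) + m"
    by (simp add: numeral_2_eq_2)
  ultimately show ?case by simp
qed

definition u :: "nat \<Rightarrow> 'a" where "u m = invn (fact m) * of_nat m * c ^ (m - 1)"
definition v :: "nat \<Rightarrow> 'a" where "v m = invn (fact m) * of_nat (m choose 2) * c ^ (m - 2)"

lemma u_sums: "fsums u E"
proof (rule fsums_shift)
  show "u 0 = 0" unfolding u_def by simp
  have "u (Suc k) = invn (fact k) * c ^ k" for k
    unfolding u_def by (simp only: diff_Suc_1 coef3)
  then show "fsums (\<lambda>k. u (Suc k)) E" using E_sums by simp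
qed

lemma v_sums: "fsums v (invn 2 * E)"
proof (rule fsums_shift)
  show "v 0 = 0" unfolding v_def by simp
  show "fsums (\<lambda>k. v (Suc k)) (invn 2 * E)"
  proof (rule fsums_shift)
    show "v (Suc 0) = 0" unfolding v_def by (simp add: binomial_eq_0)
    have "v (Suc (Suc k)) = invn 2 * (invn (fact k) * c ^ k)" for k
      unfolding v_def using coef4[of k] by (simp add: mult.assoc)
    then show "fsums (\<lambda>k. v (Suc (Suc k))) (invn 2 * E)" using fsums_multL[OF E_sums, of "invn 2"] by simp
  qed
qed

lemma br_E: "br E y = E * br c y"
proof -
  have s1: "fsums (\<lambda>m. br (invn (fact m) * c ^ m) y) (br E y)"
    by (rule fsums_map[where \<phi>="\<lambda>x. br x y", OF br_addL _ E_sums]) (use Fbr[OF _ F0I] in simp)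
  have "br (invn (fact m) * c ^ m) y = u m * br c y" for m
    unfolding u_def by (simp add: brL_invn brL_cpow mult.assoc)
  then have "fsums (\<lambda>m. br (invn (fact m) * c ^ m) y) (E * br c y)"
    using fsums_multR[OF u_sums, of "br c y"] by simp
  then show ?thesis using fsums_unique[OF s1] by simp
qed

lemma d_E: "d E = 0"
proof -
  have s1: "fsums (\<lambda>m. d (invn (fact m) * c ^ m)) (d E)"
    by (rule fsums_map[OF d_add Fd E_sums])
  have "d (invn (fact m) * c ^ m) = u m * d c - v m * br c c" for m
    unfolding u_def v_def by (simp add: d_invn d_cpow right_diff_distrib mult.assoc)
  then have "fsums (\<lambda>m. d (invn (fact m) * c ^ m)) (E * d c - invn 2 * E * br c c)"
    using fsums_diff[OF fsums_multR[OF u_sums, of "d c"] fsums_multR[OF v_sums, of "br c c"]] by simp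
  then have "d E = E * d c - invn 2 * E * br c c" using fsums_unique[OF s1] by simp
  also have "\<dots> = E * (d c - invn 2 * br c c)"
    using invn_comm[of 2 E] by (simp add: right_diff_distrib mult.assoc)
  also have "\<dots> = 0" using MC by simp
  finally show ?thesis .
qed

lemma d_T: "d (E * ea a) = E * ea (d a)"
proof -
  have "d (E * ea a) = d E * ea a + E * d (ea a) - br E (ea a)" by (rule bv_even[OF E_G])
  also have "\<dots> = E * ea (d a)" using d_E d_ea br_E by (simp add: distrib_left)
  finally show ?thesis .
qed

end


theorem mainTheorem9:
  fixes G F :: "nat \<Rightarrow> 'a::ring_1 set" and br :: "'a \<Rightarrow> 'a \<Rightarrow> 'a" and d :: "'a \<Rightarrow> 'a"
    and r :: 'a
  assumes "complete_filtered_BV G F br d"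
    and "r \<in> F 1" and "r \<in> G 1"
  shows "d \<circ> T_exp F br d r = T_exp F br d r \<circ> d"
proof -
  have cb: "cbv G F br d" using assms(1) unfolding complete_filtered_BV_def cbv_def by (elim conjE) (intro conjI; assumption)
  interpret cbvr G F br d r by (intro cbvr.intro cb cbvr_axioms.intro assms(2,3))
  have c_eq: "c_exp F br d r = c" unfolding c_exp_def c_def alpha_def X_def by simp
  have E_eq: "alg_exp F (c_exp F br d r) = E" unfolding alg_exp_def E_def c_eq ..
  have ea_eq: "exp_ad F br r a = ea a" for a unfolding exp_ad_def ea_def beta_def ..
  show ?thesis by (rule ext) (simp add: T_exp_def E_eq ea_eq d_T)
qed

end
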